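(* Let $\mathbf{v}\in K(\mathbb{F}_e)$ be a Chern character of positive rank, and assume $\Delta(\mathbf{v})\geq 1/4$ if $e=0$, $\Delta(\mathbf{v})\geq 1/8$ if $e=1$, and $\Delta(\mathbf{v})\geq 0$ if $e\geq 2$. Then there exists a line bundle $L$ on $\mathbb{F}_e$ such that $\chi(\mathbf{v}(-L))\geq 0$, $\chi(\mathbf{v}(-L-E))\leq 0$, $\chi(\mathbf{v}(-L-F))\leq 0$, and $\chi(\mathbf{v}(-L-E-F))\leq 0$.
   Context: $\mathbb{F}_e=\mathbb{P}(\mathcal{O}_{\mathbb{P}^1}\oplus\mathcal{O}_{\mathbb{P}^1}(e))$, $e\ge 0$, with fiber class $F$ and section class $E$, $E^2=-e$, $F^2=0$, $E\cdot F=1$. For a character of positive rank $r$: $\nu=c_1/r$, $\Delta=\frac12\nu^2-\mathrm{ch}_2/r$; $\mathbf{v}(D)=\mathbf{v}\cdot\mathrm{ch}\,\mathcal{O}(D)$. *)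

theory Defs
  imports Complex_Main
begin

text \<open>Numerical Chern characters on the Hirzebruch surface F_e.
  Divisor classes are written in the basis (E, F): the pair (a, b) means aE + bF,
  with E^2 = -e, F^2 = 0, E.F = 1.\<close>

definition inter :: "nat \<Rightarrow> real \<times> real \<Rightarrow> real \<times> real \<Rightarrow> real" where
  "inter e D D' = - real e * fst D * fst D' + fst D * snd D' + snd D * fst D'"

record chern =
  rk :: int
  c1E :: int
  c1F :: int
  ch2 :: real

definition c1 :: "chern \<Rightarrow> real \<times> real" where
  "c1 v = (real_of_int (c1E v), real_of_int (c1F v))"

text \<open>v lies in (the image under ch of) K(F_e): ch2 = c1^2/2 - c2 with c2 an integer.\<close>
definition is_chern_char :: "nat \<Rightarrow> chern \<Rightarrow> bool" where
  "is_chern_char e v \<longleftrightarrow> (\<exists>c2::int. ch2 v = inter e (c1 v) (c1 v) / 2 - real_of_int c2)"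

text \<open>v(D) = v . ch O(D), for the line bundle D = xE + yF.\<close>
definition twist :: "nat \<Rightarrow> chern \<Rightarrow> int \<Rightarrow> int \<Rightarrow> chern" where
  "twist e v x y = \<lparr> rk = rk v, c1E = c1E v + rk v * x, c1F = c1F v + rk v * y,
     ch2 = ch2 v + inter e (c1 v) (real_of_int x, real_of_int y)
           + real_of_int (rk v) * inter e (real_of_int x, real_of_int y) (real_of_int x, real_of_int y) / 2 \<rparr>"

text \<open>Euler characteristic via Riemann-Roch: chi = r chi(O) + c1.(-K)/2 + ch2,
  with chi(O) = 1 and -K = 2E + (e+2)F.\<close>
definition chi :: "nat \<Rightarrow> chern \<Rightarrow> real" where
  "chi e v = real_of_int (rk v) + inter e (c1 v) (2, real e + 2) / 2 + ch2 v"

definition discr :: "nat \<Rightarrow> chern \<Rightarrow> real" where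
  "discr e v = (let r = real_of_int (rk v); nu = (fst (c1 v) / r, snd (c1 v) / r)
               in inter e nu nu / 2 - ch2 v / r)"

end

theory Submission
  imports Defs
begin

lemma chi_twist:
  assumes "rk v > 0"
  shows "chi e (twist e v p q) = real_of_int (rk v) *
     ((c1E v / rk v + p + 1) * (c1F v / rk v + q + 1)
      - real e * (c1E v / rk v + p) * (c1E v / rk v + p + 1) / 2 - discr e v)"
  using assms
  by (simp add: chi_def twist_def discr_def c1_def inter_def Let_def field_simps)

theorem lemma4p5:
  fixes e :: nat and v :: chern
  assumes "is_chern_char e v"
    and "rk v > 0"
    and "e = 0 \<longrightarrow> discr e v \<ge> 1/4"
    and "e = 1 \<longrightarrow> discr e v \<ge> 1/8"
    and "e \<ge> 2 \<longrightarrow> discr e v \<ge> 0"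
  shows "\<exists>x y :: int.
           chi e (twist e v (- x) (- y)) \<ge> 0 \<and>
           chi e (twist e v (- x - 1) (- y)) \<le> 0 \<and>
           chi e (twist e v (- x) (- y - 1)) \<le> 0 \<and>
           chi e (twist e v (- x - 1) (- y - 1)) \<le> 0"
proof -
  define r where "r = real_of_int (rk v)"
  have r: "r > 0" using assms(2) by (simp add: r_def)
  define a where "a = c1E v / rk v"
  define b where "b = c1F v / rk v"
  define \<Delta> where "\<Delta> = discr e v"
  define x where "x = \<lceil>a\<rceil>"
  define \<alpha> where "\<alpha> = a - x"
  have a1: "\<alpha> \<le> 0" "\<alpha> > -1" unfolding \<alpha>_def x_def by linarith+
  define D where "D = \<Delta> + real e * \<alpha> * (\<alpha> + 1) / 2"
  define c where "c = D / (\<alpha> + 1)"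
  define y where "y = \<lfloor>b + 1 - c\<rfloor>"
  define \<beta> where "\<beta> = b - y"
  have b1: "\<beta> \<ge> c - 1" "\<beta> < c" unfolding \<beta>_def y_def by linarith+
  have pos: "\<alpha> + 1 > 0" using a1 by simp
  have h1: "(\<alpha>+1)*(\<beta>+1) \<ge> D"
  proof -
    have "(\<alpha>+1)*(\<beta>+1) \<ge> (\<alpha>+1)*c" using b1 pos by (intro mult_left_mono) auto
    thus ?thesis using pos by (simp add: c_def)
  qed
  have h2: "(\<alpha>+1)*\<beta> < D"
  proof -
    have "(\<alpha>+1)*\<beta> < (\<alpha>+1)*c" using b1 pos by (intro mult_strict_left_mono) auto
    thus ?thesis using pos by (simp add: c_def)
  qed
  have key: "\<Delta> \<ge> (\<alpha>+1)*(-\<alpha>)*(1 - real e/2)"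
  proof -
    have sq: "(\<alpha> + 1/2)^2 \<ge> 0" by simp
    have t1: "(\<alpha>+1)*(-\<alpha>) \<le> 1/4" using sq by (simp add: power2_eq_square algebra_simps)
    have "(\<alpha>+1)*\<alpha> \<le> 0" using a1 by (intro mult_nonneg_nonpos) auto
    hence t2: "(\<alpha>+1)*(-\<alpha>) \<ge> 0" by simp
    consider "e = 0" | "e = 1" | "e \<ge> 2" by linarith
    then show ?thesis
    proof cases
      case 1 then show ?thesis using assms(3) t1 by (simp add: \<Delta>_def)
    next
      case 2 then show ?thesis using assms(4) t1 by (simp add: \<Delta>_def)
    next
      case 3
      have "1 - real e/2 \<le> 0" using 3 by simp
      hence "(\<alpha>+1)*(-\<alpha>)*(1 - real e/2) \<le> 0" using t2 by (intro mult_nonneg_nonpos) auto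
      then show ?thesis using assms(5) 3 by (simp add: \<Delta>_def)
    qed
  qed
  have h3: "\<alpha>*\<beta> - real e * \<alpha>*(\<alpha>-1)/2 - \<Delta> \<le> 0"
  proof -
    have "\<alpha>*(\<beta>+1)*(\<alpha>+1) \<le> \<alpha>*D"
      using h1 a1 by (metis mult.assoc mult.commute mult_left_mono_neg)
    define G where "G = \<alpha>*\<beta> - real e * \<alpha>*(\<alpha>-1)/2 - \<Delta>"
    have eq: "(\<alpha>+1)*G = \<alpha>*(\<beta>+1)*(\<alpha>+1) - \<alpha>*D
       + (-\<Delta> + (\<alpha>+1)*(-\<alpha>)*(1 - real e/2))"
      unfolding G_def D_def by (simp add: field_simps)
    have "(\<alpha>+1)*G \<le> 0" using eq key \<open>\<alpha>*(\<beta>+1)*(\<alpha>+1) \<le> \<alpha>*D\<close> by linarith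
    hence "G \<le> 0" using pos by (simp add: mult_le_0_iff)
    thus ?thesis by (simp add: G_def)
  qed
  have CT: "\<And>p q. chi e (twist e v p q) = r * ((a + of_int p + 1) * (b + of_int q + 1)
      - real e * (a + of_int p) * (a + of_int p + 1) / 2 - \<Delta>)"
    unfolding r_def a_def b_def \<Delta>_def by (rule chi_twist[OF assms(2)])
  have E0: "chi e (twist e v (- x) (- y)) = r * ((\<alpha>+1)*(\<beta>+1) - real e*\<alpha>*(\<alpha>+1)/2 - \<Delta>)"
    unfolding CT by (simp add: \<alpha>_def \<beta>_def field_simps)
  have E1: "chi e (twist e v (- x - 1) (- y)) = r * (\<alpha>*(\<beta>+1) - real e*(\<alpha>-1)*\<alpha>/2 - \<Delta>)"
    unfolding CT by (simp add: \<alpha>_def \<beta>_def field_simps)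
  have E2: "chi e (twist e v (- x) (- y - 1)) = r * ((\<alpha>+1)*\<beta> - real e*\<alpha>*(\<alpha>+1)/2 - \<Delta>)"
    unfolding CT by (simp add: \<alpha>_def \<beta>_def field_simps)
  have E3: "chi e (twist e v (- x - 1) (- y - 1)) = r * (\<alpha>*\<beta> - real e*(\<alpha>-1)*\<alpha>/2 - \<Delta>)"
    unfolding CT by (simp add: \<alpha>_def \<beta>_def field_simps)
  show ?thesis
  proof (intro exI conjI)
    show "chi e (twist e v (- x) (- y)) \<ge> 0" unfolding E0 using r h1 D_def
      by (intro mult_nonneg_nonneg) auto
    show "chi e (twist e v (- x) (- y - 1)) \<le> 0" unfolding E2 using r h2 D_def
      by (intro mult_nonneg_nonpos) auto
    show "chi e (twist e v (- x - 1) (- y - 1)) \<le> 0" unfolding E3 using r h3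
      by (intro mult_nonneg_nonpos) (auto simp: algebra_simps)
    show "chi e (twist e v (- x - 1) (- y)) \<le> 0" unfolding E1 using r h3 a1
      by (intro mult_nonneg_nonpos) (auto simp: algebra_simps)
  qed
qed

end
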